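(* Let $G$ be a nonabelian group and let $\psi,\psi'\in\operatorname{End}(G)$ satisfy $\psi([G,G])\le Z(G)$, $\psi'([G,G])\le Z(G)$, and $[\psi(G),\psi'(G)]\subseteq Z(G)$. For $\alpha,\beta\in\mathscr{E}$ define binary operations on $G$ by \[g\circ_\alpha h=g\,\psi_\alpha(g)\,h\,\psi_\alpha(g)^{-1},\qquad g\star_\beta h=g\,\psi'_\beta(g)\,h\,\psi'_\beta(g)^{-1},\] where $\psi_\alpha=\psi\circ\alpha$ and $\psi'_\beta=\psi'\circ\beta$. Then $(G,\circ_\alpha,\star_\beta)$ is a skew left brace.
   Context: $Z(G)$ is the center and $[G,G]$ the commutator subgroup; $[\psi(G),\psi'(G)]$ is the subgroup generated by commutators $xyx^{-1}y^{-1}$ with $x\in\psi(G)$, $y\in\psi'(G)$. $\mathscr{E}$ denotes the set of formal expressions $\alpha=n_1\phi_1+\cdots+n_t\phi_t$ with $t\ge0$, $n_i\in\mathbb Z$, $\phi_i\in\operatorname{End}(G)$ (the free group on $\operatorname{End}(G)$, written additively), acting on $G$ by $\alpha(g)=\phi_1(g^{n_1})\cdots\phi_t(g^{n_t})$. A skew left brace is a triple $(B,\cdot,\circ)$ where $(B,\cdot)$ and $(B,\circ)$ are groups and $a\circ(b\cdot c)=(a\circ b)\cdot a^{-1}\cdot(a\circ c)$ for all $a,b,c\in B$, where $a^{-1}$ is the inverse of $a$ in $(B,\cdot)$. Here $(G,\circ_\alpha)$ plays the role of $(B,\cdot)$ and $(G,\star_\beta)$ the role of $(B,\circ)$. *)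

theory Defs
  imports "HOL-Algebra.Algebra"
begin

definition group_center :: "('a, 'b) monoid_scheme \<Rightarrow> 'a set" where
  "group_center G = {z \<in> carrier G. \<forall>g \<in> carrier G. z \<otimes>\<^bsub>G\<^esub> g = g \<otimes>\<^bsub>G\<^esub> z}"

definition commutator_subgroup :: "('a, 'b) monoid_scheme \<Rightarrow> 'a set \<Rightarrow> 'a set \<Rightarrow> 'a set" where
  "commutator_subgroup G A B = generate G
     {x \<otimes>\<^bsub>G\<^esub> y \<otimes>\<^bsub>G\<^esub> inv\<^bsub>G\<^esub> x \<otimes>\<^bsub>G\<^esub> inv\<^bsub>G\<^esub> y | x y. x \<in> A \<and> y \<in> B}"

text \<open>Formal expressions n_1 phi_1 + ... + n_t phi_t in the free group on End(G),
  represented as lists of pairs (n_i, phi_i); valid if every phi_i is an endomorphism.\<close>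
definition formal_expr :: "('a, 'b) monoid_scheme \<Rightarrow> (int \<times> ('a \<Rightarrow> 'a)) list \<Rightarrow> bool" where
  "formal_expr G al \<longleftrightarrow> (\<forall>p \<in> set al. snd p \<in> hom G G)"

fun expr_action :: "('a, 'b) monoid_scheme \<Rightarrow> (int \<times> ('a \<Rightarrow> 'a)) list \<Rightarrow> 'a \<Rightarrow> 'a" where
  "expr_action G [] g = \<one>\<^bsub>G\<^esub>"
| "expr_action G ((n, \<phi>) # al) g = \<phi> (g [^]\<^bsub>G\<^esub> n) \<otimes>\<^bsub>G\<^esub> expr_action G al g"

definition twisted_op :: "('a, 'b) monoid_scheme \<Rightarrow> ('a \<Rightarrow> 'a) \<Rightarrow> 'a \<Rightarrow> 'a \<Rightarrow> 'a" where
  "twisted_op G f g h = g \<otimes>\<^bsub>G\<^esub> f g \<otimes>\<^bsub>G\<^esub> h \<otimes>\<^bsub>G\<^esub> inv\<^bsub>G\<^esub> (f g)"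

definition skew_left_brace :: "'a set \<Rightarrow> ('a \<Rightarrow> 'a \<Rightarrow> 'a) \<Rightarrow> ('a \<Rightarrow> 'a \<Rightarrow> 'a) \<Rightarrow> bool" where
  "skew_left_brace B dot circ \<longleftrightarrow>
     (\<exists>e e'. group \<lparr>carrier = B, monoid.mult = dot, one = e\<rparr> \<and>
             group \<lparr>carrier = B, monoid.mult = circ, one = e'\<rparr> \<and>
             (\<forall>a \<in> B. \<forall>b \<in> B. \<forall>c \<in> B.
                circ a (dot b c) =
                dot (dot (circ a b) (inv\<^bsub>\<lparr>carrier = B, monoid.mult = dot, one = e\<rparr>\<^esub> a)) (circ a c)))"

end

theory Submission
  imports Defs
begin

declare mult_FactGroup[simp del] one_FactGroup[simp del]

abbreviation ppm :: "('a, 'b) monoid_scheme \<Rightarrow> 'a \<Rightarrow> 'a set" where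
  "ppm G x \<equiv> group_center G #>\<^bsub>G\<^esub> x"

context group begin

lemma canc1: "x \<in> carrier G \<Longrightarrow> y \<in> carrier G \<Longrightarrow> inv x \<otimes> (x \<otimes> y) = y"
  by (simp add: m_assoc[symmetric])
lemma canc2: "x \<in> carrier G \<Longrightarrow> y \<in> carrier G \<Longrightarrow> x \<otimes> (inv x \<otimes> y) = y"
  by (simp add: m_assoc[symmetric])
lemmas canc = canc1 canc2

lemma QL1:
  assumes "x \<in> carrier G" "y \<in> carrier G" "z \<in> carrier G" "y \<otimes> z = z \<otimes> y"
  shows "x \<otimes> y \<otimes> z \<otimes> inv y = x \<otimes> z"
proof -
  have "x \<otimes> y \<otimes> z \<otimes> inv y = x \<otimes> (y \<otimes> z) \<otimes> inv y" using assms by (simp add: m_assoc)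
  also have "\<dots> = x \<otimes> (z \<otimes> y) \<otimes> inv y" using assms(4) by simp
  also have "\<dots> = x \<otimes> z" using assms by (simp add: m_assoc)
  finally show ?thesis .
qed

lemma QL2:
  assumes "x \<in> carrier G" "y \<in> carrier G" "x \<otimes> y = y \<otimes> x"
  shows "inv y \<otimes> x \<otimes> y = x"
proof -
  have "inv y \<otimes> x \<otimes> y = inv y \<otimes> (x \<otimes> y)" using assms by (simp add: m_assoc)
  also have "\<dots> = inv y \<otimes> (y \<otimes> x)" using assms(3) by simp
  also have "\<dots> = x" using assms by (simp add: canc)
  finally show ?thesis .
qed

lemma QL3:
  assumes "x \<in> carrier G" "y \<in> carrier G" "x \<otimes> y = y \<otimes> x"
  shows "x \<otimes> y \<otimes> inv x = y"
proof -
  have "x \<otimes> y \<otimes> inv x = y \<otimes> x \<otimes> inv x" using assms(3) by simp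
  also have "\<dots> = y" using assms by (simp add: m_assoc)
  finally show ?thesis .
qed

lemma center_subgroup: "subgroup (group_center G) G"
proof (rule subgroupI)
  show "group_center G \<subseteq> carrier G" unfolding group_center_def by blast
  have "\<one> \<in> group_center G" unfolding group_center_def by simp
  then show "group_center G \<noteq> {}" by blast
next
  fix h assume h: "h \<in> group_center G"
  have hc: "h \<in> carrier G" using h unfolding group_center_def by blast
  have hcomm: "\<And>g. g \<in> carrier G \<Longrightarrow> h \<otimes> g = g \<otimes> h" using h unfolding group_center_def by blast
  have "\<forall>g\<in>carrier G. inv h \<otimes> g = g \<otimes> inv h"
  proof
    fix g assume g: "g \<in> carrier G"
    have "inv h \<otimes> (h \<otimes> g) \<otimes> inv h = inv h \<otimes> (g \<otimes> h) \<otimes> inv h" using hcomm[OF g] by simp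
    then show "inv h \<otimes> g = g \<otimes> inv h" using g hc by (simp add: m_assoc canc)
  qed
  then show "inv h \<in> group_center G" unfolding group_center_def using hc by blast
next
  fix h k assume h: "h \<in> group_center G" and k: "k \<in> group_center G"
  have hc: "h \<in> carrier G" using h unfolding group_center_def by blast
  have hcomm: "\<And>g. g \<in> carrier G \<Longrightarrow> h \<otimes> g = g \<otimes> h" using h unfolding group_center_def by blast
  have kc: "k \<in> carrier G" using k unfolding group_center_def by blast
  have kcomm: "\<And>g. g \<in> carrier G \<Longrightarrow> k \<otimes> g = g \<otimes> k" using k unfolding group_center_def by blast
  have "\<forall>g\<in>carrier G. h \<otimes> k \<otimes> g = g \<otimes> (h \<otimes> k)"
  proof
    fix g assume g: "g \<in> carrier G"
    have "h \<otimes> k \<otimes> g = h \<otimes> (k \<otimes> g)" using hc kc g by (simp add: m_assoc)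
    also have "\<dots> = h \<otimes> (g \<otimes> k)" using kcomm[OF g] by simp
    also have "\<dots> = (h \<otimes> g) \<otimes> k" using hc kc g by (simp add: m_assoc)
    also have "\<dots> = (g \<otimes> h) \<otimes> k" using hcomm[OF g] by simp
    also have "\<dots> = g \<otimes> (h \<otimes> k)" using hc kc g by (simp add: m_assoc)
    finally show "h \<otimes> k \<otimes> g = g \<otimes> (h \<otimes> k)" .
  qed
  then show "h \<otimes> k \<in> group_center G" unfolding group_center_def using hc kc by blast
qed

lemma center_normal: "group_center G \<lhd> G"
proof (rule normal_inv_iff[THEN iffD2], intro conjI ballI)
  show "subgroup (group_center G) G" by (rule center_subgroup)
  fix x h assume x: "x \<in> carrier G" and h: "h \<in> group_center G"
  then have a: "h \<in> carrier G" "\<forall>g\<in>carrier G. h \<otimes> g = g \<otimes> h" unfolding group_center_def by auto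
  have xh: "x \<otimes> h = h \<otimes> x" using a(2)[rule_format, OF x] by simp
  have "x \<otimes> h \<otimes> inv x = h \<otimes> x \<otimes> inv x" using xh by simp
  also have "\<dots> = h" using a(1) x by (simp add: m_assoc)
  finally have "x \<otimes> h \<otimes> inv x = h" .
  then show "x \<otimes> h \<otimes> inv x \<in> group_center G" using h by simp
qed


lemma pp_hom: "(\<lambda>x. ppm G x) \<in> hom G (G Mod group_center G)"
  using normal.r_coset_hom_Mod[OF center_normal] .

lemma QQ_group: "group (G Mod group_center G)"
  using normal.factorgroup_is_group[OF center_normal] .

lemma pp_mult: "x \<in> carrier G \<Longrightarrow> y \<in> carrier G \<Longrightarrow> ppm G (x \<otimes> y) = ppm G x \<otimes>\<^bsub>(G Mod group_center G)\<^esub> ppm G y"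
  using pp_hom by (simp add: hom_mult)

lemma pp_closed: "x \<in> carrier G \<Longrightarrow> ppm G x \<in> carrier (G Mod group_center G)"
  using pp_hom by (simp add: hom_in_carrier)

lemma pp_inv: "x \<in> carrier G \<Longrightarrow> ppm G (inv x) = inv\<^bsub>(G Mod group_center G)\<^esub> ppm G x"
  using pp_hom QQ_group by (simp add: group_hom.hom_inv group_hom_axioms_def group_hom_def is_group)

lemma pp_pow: "x \<in> carrier G \<Longrightarrow> ppm G (x [^] (n::int)) = ppm G x [^]\<^bsub>(G Mod group_center G)\<^esub> n"
  using hom_int_pow[OF pp_hom _ is_group QQ_group] by simp

lemma pp_center: "z \<in> group_center G \<Longrightarrow> ppm G z = \<one>\<^bsub>(G Mod group_center G)\<^esub>"
  using coset_join2[OF _ center_subgroup] by (simp add: FactGroup_def group_center_def)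

lemma pp_conj:
  assumes "ppm G a = ppm G b" "a \<in> carrier G" "b \<in> carrier G" "x \<in> carrier G"
  shows "a \<otimes> x \<otimes> inv a = b \<otimes> x \<otimes> inv b"
proof -
  have "a \<in> ppm G a" by (rule rcos_self[OF assms(2) center_subgroup])
  then have "a \<in> ppm G b" using assms(1) by simp
  then have zZ: "a \<otimes> inv b \<in> group_center G"
    using subgroup.rcos_module[OF center_subgroup is_group assms(3) assms(2)] by blast
  define z where "z = a \<otimes> inv b"
  have zc: "z \<in> carrier G" "\<And>g. g \<in> carrier G \<Longrightarrow> z \<otimes> g = g \<otimes> z"
    using zZ unfolding z_def group_center_def by blast+
  have az: "a = z \<otimes> b" unfolding z_def using assms by (simp add: m_assoc)
  have "a \<otimes> x \<otimes> inv a = z \<otimes> (b \<otimes> x \<otimes> inv b) \<otimes> inv z"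
    unfolding az using zc(1) assms by (simp add: m_assoc inv_mult_group)
  also have "\<dots> = (b \<otimes> x \<otimes> inv b) \<otimes> z \<otimes> inv z" using zc(2)[of "b \<otimes> x \<otimes> inv b"] assms by simp
  also have "\<dots> = b \<otimes> x \<otimes> inv b" using zc(1) assms by (simp add: m_assoc)
  finally show ?thesis .
qed

lemma pp_comm:
  assumes "u \<otimes> v \<otimes> inv u \<otimes> inv v \<in> group_center G" "u \<in> carrier G" "v \<in> carrier G"
  shows "ppm G u \<otimes>\<^bsub>(G Mod group_center G)\<^esub> ppm G v = ppm G v \<otimes>\<^bsub>(G Mod group_center G)\<^esub> ppm G u"
proof -
  have "u \<otimes> v = (u \<otimes> v \<otimes> inv u \<otimes> inv v) \<otimes> (v \<otimes> u)"
    using assms by (simp add: m_assoc canc)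
  then have e1: "ppm G (u \<otimes> v) = ppm G (u \<otimes> v \<otimes> inv u \<otimes> inv v) \<otimes>\<^bsub>(G Mod group_center G)\<^esub> ppm G (v \<otimes> u)"
    using assms by (metis pp_mult m_closed inv_closed)
  have e2: "ppm G (u \<otimes> v \<otimes> inv u \<otimes> inv v) = \<one>\<^bsub>(G Mod group_center G)\<^esub>" using assms pp_center by blast
  have e3: "ppm G (u \<otimes> v) = ppm G (v \<otimes> u)"
    unfolding e1 e2 by (rule monoid.l_one[OF group.is_monoid[OF QQ_group] pp_closed]) (use assms in simp)
  show ?thesis using e3 assms by (simp only: pp_mult)
qed

end

locale tw = group G + Q: group Q
  for G :: "('a, 'b) monoid_scheme" (structure) and Q :: "('c, 'd) monoid_scheme" +
  fixes p :: "'a \<Rightarrow> 'c"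
  assumes p_hom: "p \<in> hom G Q"
    and p_conj: "\<And>a b x. p a = p b \<Longrightarrow> a \<in> carrier G \<Longrightarrow> b \<in> carrier G \<Longrightarrow> x \<in> carrier G
       \<Longrightarrow> a \<otimes> x \<otimes> inv a = b \<otimes> x \<otimes> inv b"
begin

definition good :: "('a \<Rightarrow> 'a) \<Rightarrow> bool" where
  "good f \<longleftrightarrow> (\<forall>g\<in>carrier G. f g \<in> carrier G) \<and>
     (\<forall>g\<in>carrier G. \<forall>h\<in>carrier G. p (f (g \<otimes> h)) = p (f g) \<otimes>\<^bsub>Q\<^esub> p (f h)) \<and>
     (\<forall>g\<in>carrier G. \<forall>h\<in>carrier G. p (f g) \<otimes>\<^bsub>Q\<^esub> p (f h) = p (f h) \<otimes>\<^bsub>Q\<^esub> p (f g))"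

lemma ghom: "h \<in> hom G Q \<Longrightarrow> group_hom G Q h"
  by (simp add: group_hom_axioms_def group_hom_def is_group Q.is_group)

lemma p_closed: "x \<in> carrier G \<Longrightarrow> p x \<in> carrier Q"
  using p_hom by (simp add: hom_in_carrier)
lemma p_mult: "x \<in> carrier G \<Longrightarrow> y \<in> carrier G \<Longrightarrow> p (x \<otimes> y) = p x \<otimes>\<^bsub>Q\<^esub> p y"
  using p_hom by (simp add: hom_mult)
lemma p_inv: "x \<in> carrier G \<Longrightarrow> p (inv x) = inv\<^bsub>Q\<^esub> p x"
  using group_hom.hom_inv[OF ghom[OF p_hom]] by simp

context
  fixes f assumes gf: "good f"
begin

lemma f_closed: "g \<in> carrier G \<Longrightarrow> f g \<in> carrier G"
  using gf unfolding good_def by blast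
lemma P_mult: "g \<in> carrier G \<Longrightarrow> h \<in> carrier G \<Longrightarrow> p (f (g \<otimes> h)) = p (f g) \<otimes>\<^bsub>Q\<^esub> p (f h)"
  using gf unfolding good_def by blast
lemma P_comm: "g \<in> carrier G \<Longrightarrow> h \<in> carrier G \<Longrightarrow> p (f g) \<otimes>\<^bsub>Q\<^esub> p (f h) = p (f h) \<otimes>\<^bsub>Q\<^esub> p (f g)"
  using gf unfolding good_def by blast
lemma P_closed: "g \<in> carrier G \<Longrightarrow> p (f g) \<in> carrier Q"
  by (simp add: f_closed p_closed)
lemma P_hom: "(\<lambda>x. p (f x)) \<in> hom G Q"
  by (rule homI) (simp_all add: P_closed P_mult)
lemma P_inv: "g \<in> carrier G \<Longrightarrow> p (f (inv g)) = inv\<^bsub>Q\<^esub> p (f g)"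
  using group_hom.hom_inv[OF ghom[OF P_hom]] by simp
lemma P_one: "p (f \<one>) = \<one>\<^bsub>Q\<^esub>"
  using group_hom.hom_one[OF ghom[OF P_hom]] by simp

lemma tw_expand: "g \<in> carrier G \<Longrightarrow> h \<in> carrier G \<Longrightarrow>
   twisted_op G f g h = g \<otimes> (f g \<otimes> h \<otimes> inv (f g))"
  by (simp add: twisted_op_def m_assoc f_closed)

lemma tw_closed: "g \<in> carrier G \<Longrightarrow> h \<in> carrier G \<Longrightarrow> twisted_op G f g h \<in> carrier G"
  by (simp add: twisted_op_def f_closed)

lemma P_tw: assumes "a \<in> carrier G" "b \<in> carrier G"
  shows "p (f (twisted_op G f a b)) = p (f a \<otimes> f b)"
proof -
  have fa: "f a \<in> carrier G" using assms f_closed by blast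
  have "p (f (twisted_op G f a b)) = p (f a) \<otimes>\<^bsub>Q\<^esub> p (f (f a)) \<otimes>\<^bsub>Q\<^esub> p (f b) \<otimes>\<^bsub>Q\<^esub> inv\<^bsub>Q\<^esub> p (f (f a))"
    unfolding twisted_op_def using assms fa by (simp add: P_mult P_inv)
  also have "\<dots> = p (f a) \<otimes>\<^bsub>Q\<^esub> p (f b)"
    by (rule Q.QL1) (simp_all add: assms fa P_closed P_comm)
  also have "\<dots> = p (f a \<otimes> f b)" using assms by (simp add: p_mult f_closed)
  finally show ?thesis .
qed

abbreviation "TG \<equiv> \<lparr>carrier = carrier G, monoid.mult = twisted_op G f, one = \<one>\<rparr>"

lemma tw_inv_ok: assumes g: "g \<in> carrier G"
  shows "twisted_op G f (inv (f g) \<otimes> inv g \<otimes> f g) g = \<one>"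
proof -
  define y where "y = inv (f g) \<otimes> inv g \<otimes> f g"
  have fg: "f g \<in> carrier G" using g f_closed by blast
  have y: "y \<in> carrier G" unfolding y_def using g fg by simp
  have "p (f y) = inv\<^bsub>Q\<^esub> p (f (f g)) \<otimes>\<^bsub>Q\<^esub> p (f (inv g)) \<otimes>\<^bsub>Q\<^esub> p (f (f g))"
    unfolding y_def using g fg by (simp add: P_mult P_inv)
  also have "\<dots> = p (f (inv g))"
    by (rule Q.QL2) (simp_all add: g fg P_closed P_comm)
  also have "\<dots> = p (inv (f g))" using g fg by (simp add: P_inv p_inv)
  finally have py: "p (f y) = p (inv (f g))" .
  have "twisted_op G f y g = y \<otimes> (f y \<otimes> g \<otimes> inv (f y))" using y g by (simp add: tw_expand)
  also have "\<dots> = y \<otimes> (inv (f g) \<otimes> g \<otimes> inv (inv (f g)))"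
    using p_conj[OF py] y g fg f_closed by simp
  also have "\<dots> = \<one>" unfolding y_def using g fg by (simp add: m_assoc canc)
  finally show ?thesis unfolding y_def .
qed

lemma tw_group: "group TG"
proof (rule groupI)
  fix x y assume "x \<in> carrier TG" "y \<in> carrier TG"
  then show "x \<otimes>\<^bsub>TG\<^esub> y \<in> carrier TG" by (simp add: tw_closed)
next
  show "\<one>\<^bsub>TG\<^esub> \<in> carrier TG" by simp
next
  fix x assume x: "x \<in> carrier TG"
  have "p (f \<one>) = p \<one>" using group_hom.hom_one[OF ghom[OF p_hom]] P_one by simp
  then have "f \<one> \<otimes> x \<otimes> inv (f \<one>) = \<one> \<otimes> x \<otimes> inv \<one>"
    by (rule p_conj) (use f_closed x in simp_all)
  then show "\<one>\<^bsub>TG\<^esub> \<otimes>\<^bsub>TG\<^esub> x = x" using x by (simp add: twisted_op_def f_closed m_assoc)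
next
  fix x assume x: "x \<in> carrier TG"
  then show "\<exists>y\<in>carrier TG. y \<otimes>\<^bsub>TG\<^esub> x = \<one>\<^bsub>TG\<^esub>"
    using tw_inv_ok[of x] by (intro bexI[of _ "inv (f x) \<otimes> inv x \<otimes> f x"]) (simp_all add: f_closed)
next
  fix a b c assume a: "a \<in> carrier TG" and b: "b \<in> carrier TG" and c: "c \<in> carrier TG"
  then have a: "a \<in> carrier G" and b: "b \<in> carrier G" and c: "c \<in> carrier G" by simp_all
  have fa: "f a \<in> carrier G" and fb: "f b \<in> carrier G" using a b f_closed by auto
  have ab: "twisted_op G f a b \<in> carrier G" using a b tw_closed by blast
  have "twisted_op G f (twisted_op G f a b) c
     = twisted_op G f a b \<otimes> (f (twisted_op G f a b) \<otimes> c \<otimes> inv (f (twisted_op G f a b)))"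
    using ab c by (simp add: tw_expand)
  also have "\<dots> = twisted_op G f a b \<otimes> ((f a \<otimes> f b) \<otimes> c \<otimes> inv (f a \<otimes> f b))"
    using p_conj[OF P_tw[OF a b]] ab c fa fb f_closed by simp
  also have "\<dots> = twisted_op G f a (twisted_op G f b c)"
    using a b c fa fb by (simp add: tw_expand tw_closed m_assoc canc inv_mult_group)
  finally show "a \<otimes>\<^bsub>TG\<^esub> b \<otimes>\<^bsub>TG\<^esub> c = a \<otimes>\<^bsub>TG\<^esub> (b \<otimes>\<^bsub>TG\<^esub> c)" by simp
qed

lemma tw_inv: "a \<in> carrier G \<Longrightarrow> inv\<^bsub>TG\<^esub> a = inv (f a) \<otimes> inv a \<otimes> f a"
  using group.inv_equality[OF tw_group, of "inv (f a) \<otimes> inv a \<otimes> f a" a] tw_inv_ok[of a]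
  by (simp add: f_closed)

end

lemma tw_brace:
  assumes gf: "good f" and gk: "good k"
    and cross: "\<And>g h. g \<in> carrier G \<Longrightarrow> h \<in> carrier G \<Longrightarrow>
        p (k g) \<otimes>\<^bsub>Q\<^esub> p (f h) = p (f h) \<otimes>\<^bsub>Q\<^esub> p (k g)"
  shows "skew_left_brace (carrier G) (twisted_op G f) (twisted_op G k)"
  unfolding skew_left_brace_def
proof (intro exI conjI ballI)
  show "group \<lparr>carrier = carrier G, monoid.mult = twisted_op G f, one = \<one>\<rparr>" by (rule tw_group[OF gf])
  show "group \<lparr>carrier = carrier G, monoid.mult = twisted_op G k, one = \<one>\<rparr>" by (rule tw_group[OF gk])
  fix a b c assume a: "a \<in> carrier G" and b: "b \<in> carrier G" and c: "c \<in> carrier G"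
  note fc = f_closed[OF gf] and kc = f_closed[OF gk]
  have fa: "f a \<in> carrier G" and fb: "f b \<in> carrier G" and ka: "k a \<in> carrier G"
    using a b fc kc by auto
  define x where "x = twisted_op G k a b"
  define y where "y = inv (f a) \<otimes> inv a \<otimes> f a"
  define w where "w = twisted_op G f x y"
  have x: "x \<in> carrier G" unfolding x_def using a b by (simp add: tw_closed[OF gk])
  have y: "y \<in> carrier G" unfolding y_def using a fa by simp
  have w: "w \<in> carrier G" unfolding w_def using x y by (simp add: tw_closed[OF gf])
  have fx: "f x \<in> carrier G" using x fc by blast
  have iv: "inv\<^bsub>\<lparr>carrier = carrier G, monoid.mult = twisted_op G f, one = \<one>\<rparr>\<^esub> a = y"
    unfolding y_def by (rule tw_inv[OF gf a])
  have Py: "p (f y) = inv\<^bsub>Q\<^esub> p (f a)"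
  proof -
    have "p (f y) = inv\<^bsub>Q\<^esub> p (f (f a)) \<otimes>\<^bsub>Q\<^esub> p (f (inv a)) \<otimes>\<^bsub>Q\<^esub> p (f (f a))"
      unfolding y_def using a fa by (simp add: P_mult[OF gf] P_inv[OF gf])
    also have "\<dots> = p (f (inv a))"
      by (rule Q.QL2) (simp_all add: a fa P_closed[OF gf] P_comm[OF gf])
    also have "\<dots> = inv\<^bsub>Q\<^esub> p (f a)" using a by (simp add: P_inv[OF gf])
    finally show ?thesis .
  qed
  have Px: "p (f x) = p (f a) \<otimes>\<^bsub>Q\<^esub> p (f b)"
  proof -
    have "p (f x) = p (f a) \<otimes>\<^bsub>Q\<^esub> p (f (k a)) \<otimes>\<^bsub>Q\<^esub> p (f b) \<otimes>\<^bsub>Q\<^esub> inv\<^bsub>Q\<^esub> p (f (k a))"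
      unfolding x_def twisted_op_def using a b ka by (simp add: P_mult[OF gf] P_inv[OF gf])
    also have "\<dots> = p (f a) \<otimes>\<^bsub>Q\<^esub> p (f b)"
      by (rule Q.QL1) (simp_all add: a b ka P_closed[OF gf] P_comm[OF gf])
    finally show ?thesis .
  qed
  have Pw: "p (f w) = p (f x \<otimes> inv (f a))"
  proof -
    have "p (f w) = p (f x) \<otimes>\<^bsub>Q\<^esub> p (f y)" unfolding w_def using x y P_tw[OF gf x y] fx
      by (simp add: p_mult f_closed[OF gf])
    also have "\<dots> = p (f x \<otimes> inv (f a))" using fx fa by (simp add: p_mult p_inv Py)
    finally show ?thesis .
  qed
  have Pxa: "p (f x \<otimes> inv (f a)) = p (f b)"
  proof -
    have "p (f x \<otimes> inv (f a)) = p (f a) \<otimes>\<^bsub>Q\<^esub> p (f b) \<otimes>\<^bsub>Q\<^esub> inv\<^bsub>Q\<^esub> p (f a)"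
      using fx fa by (simp add: p_mult p_inv Px)
    also have "\<dots> = p (f b)"
      by (rule Q.QL3) (simp_all add: a b P_closed[OF gf] P_comm[OF gf])
    finally show ?thesis .
  qed
  have kf: "p (k a \<otimes> f b) = p (f b \<otimes> k a)"
    using ka fb cross[OF a b] by (simp add: p_mult)
  have "twisted_op G f (twisted_op G f x y) (twisted_op G k a c)
      = w \<otimes> (f w \<otimes> (a \<otimes> (k a \<otimes> c \<otimes> inv (k a))) \<otimes> inv (f w))"
    unfolding w_def[symmetric] using w a c ka by (simp add: tw_expand[OF gf] tw_expand[OF gk])
  also have "\<dots> = w \<otimes> ((f x \<otimes> inv (f a)) \<otimes> (a \<otimes> (k a \<otimes> c \<otimes> inv (k a))) \<otimes> inv (f x \<otimes> inv (f a)))"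
    using p_conj[OF Pw] w a c ka fc fx fa by simp
  also have "\<dots> = x \<otimes> ((f x \<otimes> inv (f a)) \<otimes> (k a \<otimes> c \<otimes> inv (k a)) \<otimes> inv (f x \<otimes> inv (f a)))"
    unfolding w_def y_def using x a c ka fx fa
    by (simp add: tw_expand[OF gf] m_assoc canc inv_mult_group)
  also have "\<dots> = x \<otimes> (f b \<otimes> (k a \<otimes> c \<otimes> inv (k a)) \<otimes> inv (f b))"
    using p_conj[OF Pxa] fx fa fb ka c by simp
  also have "\<dots> = a \<otimes> (k a \<otimes> b \<otimes> inv (k a)) \<otimes> ((f b \<otimes> k a) \<otimes> c \<otimes> inv (f b \<otimes> k a))"
    unfolding x_def using a b c ka fb by (simp add: tw_expand[OF gk] m_assoc inv_mult_group)
  also have "\<dots> = a \<otimes> (k a \<otimes> b \<otimes> inv (k a)) \<otimes> ((k a \<otimes> f b) \<otimes> c \<otimes> inv (k a \<otimes> f b))"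
    using p_conj[OF kf] fb ka c by simp
  also have "\<dots> = twisted_op G k a (twisted_op G f b c)"
    using a b c ka fb by (simp add: tw_expand[OF gk] tw_expand[OF gf] tw_closed[OF gf] m_assoc inv_mult_group canc)
  finally show "twisted_op G k a (twisted_op G f b c) =
       twisted_op G f (twisted_op G f (twisted_op G k a b)
         (inv\<^bsub>\<lparr>carrier = carrier G, monoid.mult = twisted_op G f, one = \<one>\<rparr>\<^esub> a)) (twisted_op G k a c)"
    unfolding iv x_def[symmetric] by simp
qed

end


lemma (in group) QL4:
  assumes "a \<in> carrier G" "b \<in> carrier G" "c \<in> carrier G" "d \<in> carrier G" "b \<otimes> c = c \<otimes> b"
  shows "a \<otimes> b \<otimes> (c \<otimes> d) = a \<otimes> c \<otimes> (b \<otimes> d)"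
proof -
  have "a \<otimes> b \<otimes> (c \<otimes> d) = a \<otimes> (b \<otimes> c) \<otimes> d" using assms(1-4) by (simp add: m_assoc)
  also have "\<dots> = a \<otimes> (c \<otimes> b) \<otimes> d" using assms(5) by simp
  also have "\<dots> = a \<otimes> c \<otimes> (b \<otimes> d)" using assms(1-4) by (simp add: m_assoc)
  finally show ?thesis .
qed

lemma (in group) derived_mem:
  "x \<in> carrier G \<Longrightarrow> y \<in> carrier G \<Longrightarrow> x \<otimes> y \<otimes> inv x \<otimes> inv y \<in> derived G (carrier G)"
  unfolding derived_def by (rule generate.incl) blast

lemma (in group) E_closed:
  "formal_expr G al \<Longrightarrow> g \<in> carrier G \<Longrightarrow> expr_action G al g \<in> carrier G"
proof (induction al)
  case Nil then show ?case by simp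
next
  case (Cons a al)
  obtain n \<phi> where a: "a = (n, \<phi>)" by (cases a)
  have phi: "\<phi> \<in> hom G G" and fe: "formal_expr G al" using Cons.prems a unfolding formal_expr_def by auto
  show ?case using Cons.IH[OF fe Cons.prems(2)] Cons.prems(2) phi a by (simp add: hom_in_carrier)
qed

context group begin

lemma selfhom: "h \<in> hom G G \<Longrightarrow> group_hom G G h"
  by (simp add: group_hom_axioms_def group_hom_def is_group)

context
  fixes \<psi> assumes psi: "\<psi> \<in> hom G G" and pc: "\<psi> ` derived G (carrier G) \<subseteq> group_center G"
begin

lemma R_comm:
  assumes x: "x \<in> carrier G" and y: "y \<in> carrier G"
  shows "ppm G (\<psi> x) \<otimes>\<^bsub>G Mod group_center G\<^esub> ppm G (\<psi> y) = ppm G (\<psi> y) \<otimes>\<^bsub>G Mod group_center G\<^esub> ppm G (\<psi> x)"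
proof (rule pp_comm)
  have "\<psi> x \<otimes> \<psi> y \<otimes> inv (\<psi> x) \<otimes> inv (\<psi> y) = \<psi> (x \<otimes> y \<otimes> inv x \<otimes> inv y)"
    using x y group_hom.hom_mult[OF selfhom[OF psi]] group_hom.hom_inv[OF selfhom[OF psi]] by simp
  also have "\<dots> \<in> group_center G" using pc derived_mem[OF x y] by blast
  finally show "\<psi> x \<otimes> \<psi> y \<otimes> inv (\<psi> x) \<otimes> inv (\<psi> y) \<in> group_center G" .
  show "\<psi> x \<in> carrier G" "\<psi> y \<in> carrier G" using x y psi by (simp_all add: hom_in_carrier)
qed

lemma R_hom: "(\<lambda>x. ppm G (\<psi> x)) \<in> hom G (G Mod group_center G)"
  by (rule homI) (simp_all add: hom_in_carrier[OF psi] pp_closed hom_mult[OF psi] pp_mult)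

lemma R_pow: "x \<in> carrier G \<Longrightarrow> ppm G (\<psi> (x [^] (n::int))) = ppm G (\<psi> x) [^]\<^bsub>G Mod group_center G\<^esub> n"
  using hom_int_pow[OF R_hom _ is_group QQ_group] by simp

lemma R_E_mult:
  "formal_expr G al \<Longrightarrow> g \<in> carrier G \<Longrightarrow> h \<in> carrier G \<Longrightarrow>
   ppm G (\<psi> (expr_action G al (g \<otimes> h))) =
   ppm G (\<psi> (expr_action G al g)) \<otimes>\<^bsub>G Mod group_center G\<^esub> ppm G (\<psi> (expr_action G al h))"
proof (induction al)
  case Nil
  have "ppm G (\<psi> \<one>) = \<one>\<^bsub>G Mod group_center G\<^esub>"
    using group_hom.hom_one[OF group_hom.intro[OF is_group QQ_group group_hom_axioms.intro[OF R_hom]]] by simp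
  then show ?case using group.is_monoid[OF QQ_group] by (simp add: monoid.l_one)
next
  case (Cons a al)
  obtain n \<phi> where a: "a = (n, \<phi>)" by (cases a)
  have phi: "\<phi> \<in> hom G G" and fe: "formal_expr G al" using Cons.prems a unfolding formal_expr_def by auto
  have g: "g \<in> carrier G" and h: "h \<in> carrier G" using Cons.prems by auto
  have pg: "\<phi> g \<in> carrier G" and ph: "\<phi> h \<in> carrier G" using g h phi by (simp_all add: hom_in_carrier)
  have Rphi: "\<And>z. z \<in> carrier G \<Longrightarrow> ppm G (\<psi> (\<phi> (z [^] n))) = ppm G (\<psi> (\<phi> z)) [^]\<^bsub>G Mod group_center G\<^esub> n"
    using phi by (simp add: hom_int_pow[OF phi _ is_group is_group] R_pow hom_in_carrier)
  have "ppm G (\<psi> (\<phi> ((g \<otimes> h) [^] n))) = (ppm G (\<psi> (\<phi> g)) \<otimes>\<^bsub>G Mod group_center G\<^esub> ppm G (\<psi> (\<phi> h))) [^]\<^bsub>G Mod group_center G\<^esub> n"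
    using g h pg ph Rphi[of "g \<otimes> h"] by (simp add: hom_mult[OF phi] hom_mult[OF psi] hom_in_carrier[OF psi] pp_mult)
  also have "\<dots> = ppm G (\<psi> (\<phi> g)) [^]\<^bsub>G Mod group_center G\<^esub> n \<otimes>\<^bsub>G Mod group_center G\<^esub> ppm G (\<psi> (\<phi> h)) [^]\<^bsub>G Mod group_center G\<^esub> n"
    by (rule group.int_pow_mult_distrib[OF QQ_group]) (use pg ph R_comm psi in \<open>simp_all add: pp_closed hom_in_carrier\<close>)
  also have "\<dots> = ppm G (\<psi> (\<phi> (g [^] n))) \<otimes>\<^bsub>G Mod group_center G\<^esub> ppm G (\<psi> (\<phi> (h [^] n)))"
    using Rphi g h by simp
  finally have e1: "ppm G (\<psi> (\<phi> ((g \<otimes> h) [^] n))) = ppm G (\<psi> (\<phi> (g [^] n))) \<otimes>\<^bsub>G Mod group_center G\<^esub> ppm G (\<psi> (\<phi> (h [^] n)))" .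
  have cl: "\<And>z. z \<in> carrier G \<Longrightarrow> ppm G (\<psi> z) \<in> carrier (G Mod group_center G)"
    using psi by (simp add: pp_closed hom_in_carrier)
  have Eg: "expr_action G al g \<in> carrier G" and Eh: "expr_action G al h \<in> carrier G"
    using E_closed[OF fe] g h by auto
  have pgn: "\<phi> (g [^] n) \<in> carrier G" and phn: "\<phi> (h [^] n) \<in> carrier G" using g h phi by (simp_all add: hom_in_carrier)
  have "ppm G (\<psi> (expr_action G (a # al) (g \<otimes> h))) =
        ppm G (\<psi> (\<phi> ((g \<otimes> h) [^] n))) \<otimes>\<^bsub>G Mod group_center G\<^esub> ppm G (\<psi> (expr_action G al (g \<otimes> h)))"
    using a g h phi E_closed[OF fe, of "g \<otimes> h"] by (simp add: hom_mult[OF psi] hom_in_carrier[OF psi] pp_mult hom_in_carrier)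
  also have "\<dots> = ppm G (\<psi> (\<phi> (g [^] n))) \<otimes>\<^bsub>G Mod group_center G\<^esub> ppm G (\<psi> (\<phi> (h [^] n))) \<otimes>\<^bsub>G Mod group_center G\<^esub>
        (ppm G (\<psi> (expr_action G al g)) \<otimes>\<^bsub>G Mod group_center G\<^esub> ppm G (\<psi> (expr_action G al h)))"
    using e1 Cons.IH[OF fe g h] by simp
  also have "\<dots> = ppm G (\<psi> (\<phi> (g [^] n))) \<otimes>\<^bsub>G Mod group_center G\<^esub> ppm G (\<psi> (expr_action G al g)) \<otimes>\<^bsub>G Mod group_center G\<^esub>
        (ppm G (\<psi> (\<phi> (h [^] n))) \<otimes>\<^bsub>G Mod group_center G\<^esub> ppm G (\<psi> (expr_action G al h)))"
    by (rule group.QL4[OF QQ_group]) (simp_all add: cl pgn phn Eg Eh R_comm)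
  also have "\<dots> = ppm G (\<psi> (expr_action G (a # al) g)) \<otimes>\<^bsub>G Mod group_center G\<^esub> ppm G (\<psi> (expr_action G (a # al) h))"
    using a g h Eg Eh pgn phn by (simp add: hom_mult[OF psi] hom_in_carrier[OF psi] pp_mult hom_in_carrier)
  finally show ?case .
qed

lemma good_psi:
  assumes "formal_expr G al"
  shows "tw.good G (G Mod group_center G) (ppm G) (\<psi> \<circ> expr_action G al)"
proof -
  interpret T: tw G "G Mod group_center G" "ppm G"
    by (rule tw.intro[OF is_group QQ_group tw_axioms.intro[OF pp_hom pp_conj]]) (simp_all)
  show ?thesis unfolding T.good_def
    using assms psi by (simp add: E_closed hom_in_carrier R_E_mult R_comm)
qed

end
end

theorem theorem3p3:
  fixes G :: "('a, 'b) monoid_scheme"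
    and \<psi> \<psi>' :: "'a \<Rightarrow> 'a"
    and \<alpha> \<beta> :: "(int \<times> ('a \<Rightarrow> 'a)) list"
  assumes "group G"
    and "\<not> comm_group G"
    and "\<psi> \<in> hom G G" and "\<psi>' \<in> hom G G"
    and "\<psi> ` derived G (carrier G) \<subseteq> group_center G"
    and "\<psi>' ` derived G (carrier G) \<subseteq> group_center G"
    and "commutator_subgroup G (\<psi> ` carrier G) (\<psi>' ` carrier G) \<subseteq> group_center G"
    and "formal_expr G \<alpha>" and "formal_expr G \<beta>"
  shows "skew_left_brace (carrier G)
           (twisted_op G (\<psi> \<circ> expr_action G \<alpha>))
           (twisted_op G (\<psi>' \<circ> expr_action G \<beta>))"
proof -
  interpret group G by fact
  interpret T: tw G "G Mod group_center G" "ppm G"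
    by (rule tw.intro[OF is_group QQ_group tw_axioms.intro[OF pp_hom pp_conj]]) (simp_all)
  have gf: "T.good (\<psi> \<circ> expr_action G \<alpha>)" by (rule good_psi[OF assms(3) assms(5) assms(8)])
  have gk: "T.good (\<psi>' \<circ> expr_action G \<beta>)" by (rule good_psi[OF assms(4) assms(6) assms(9)])
  show ?thesis
  proof (rule T.tw_brace[OF gf gk])
    fix g h assume g: "g \<in> carrier G" and h: "h \<in> carrier G"
    define u where "u = \<psi>' (expr_action G \<beta> g)"
    define v where "v = \<psi> (expr_action G \<alpha> h)"
    have u: "u \<in> carrier G" unfolding u_def using assms(4,9) g by (simp add: E_closed hom_in_carrier)
    have v: "v \<in> carrier G" unfolding v_def using assms(3,8) h by (simp add: E_closed hom_in_carrier)
    have "v \<otimes>\<^bsub>G\<^esub> u \<otimes>\<^bsub>G\<^esub> inv\<^bsub>G\<^esub> v \<otimes>\<^bsub>G\<^esub> inv\<^bsub>G\<^esub> u \<in> commutator_subgroup G (\<psi> ` carrier G) (\<psi>' ` carrier G)"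
      unfolding commutator_subgroup_def
    proof (rule generate.incl)
      have "v \<in> \<psi> ` carrier G" unfolding v_def using assms(8) h by (simp add: E_closed)
      moreover have "u \<in> \<psi>' ` carrier G" unfolding u_def using assms(9) g by (simp add: E_closed)
      ultimately show "v \<otimes>\<^bsub>G\<^esub> u \<otimes>\<^bsub>G\<^esub> inv\<^bsub>G\<^esub> v \<otimes>\<^bsub>G\<^esub> inv\<^bsub>G\<^esub> u \<in> {x \<otimes>\<^bsub>G\<^esub> y \<otimes>\<^bsub>G\<^esub> inv\<^bsub>G\<^esub> x \<otimes>\<^bsub>G\<^esub> inv\<^bsub>G\<^esub> y |x y. x \<in> \<psi> ` carrier G \<and> y \<in> \<psi>' ` carrier G}"
        by blast
    qed
    then have "v \<otimes>\<^bsub>G\<^esub> u \<otimes>\<^bsub>G\<^esub> inv\<^bsub>G\<^esub> v \<otimes>\<^bsub>G\<^esub> inv\<^bsub>G\<^esub> u \<in> group_center G" using assms(7) by blast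
    from pp_comm[OF this v u]
    show "ppm G ((\<psi>' \<circ> expr_action G \<beta>) g) \<otimes>\<^bsub>G Mod group_center G\<^esub> ppm G ((\<psi> \<circ> expr_action G \<alpha>) h) =
          ppm G ((\<psi> \<circ> expr_action G \<alpha>) h) \<otimes>\<^bsub>G Mod group_center G\<^esub> ppm G ((\<psi>' \<circ> expr_action G \<beta>) g)"
      unfolding u_def v_def by simp
  qed
qed



end
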